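(* Let $p>1$, $N\in\mathbb{N}$, and let $\mu_1,\mu_2$ be permutation invariant Radon probability measures on $\mathbb{R}^N$ whose $p_0$:th moments are finite for some $p_0\ge p$. Let $J=(J_1,\dots,J_{n_J})$ be a finite sequence of elements of $[N]$ (repetitions allowed), of length $n_J$, and let $I=\{J_\ell:\ell\in[n_J]\}\subset[N]$. For $x\in\mathbb{R}^N$ put $x^J=\prod_{\ell=1}^{n_J}x_{J_\ell}$. Assume $n_J\le p_0+1-\frac{p_0}{p}$. Then \[ \left|\langle x^J\rangle_{\mu_1}-\langle x^J\rangle_{\mu_2}\right|\le n_J\,M(J,p)^{n_J-1}\left(\frac{|I|}{1-\frac{|I|}{N}}\right)^{1/p}w_p(\mu_1,\mu_2;N), \] where $M(J,p)=1$ if $n_J=1$, and otherwise, with $q=\frac{p}{p-1}$, \[ M(J,p)=\max_{i\in I}\left(\langle|x_i|^{q(n_J-1)}\rangle_{\mu_1}^{\frac{1}{q(n_J-1)}},\ \langle|x_i|^{q(n_J-1)}\rangle_{\mu_2}^{\frac{1}{q(n_J-1)}}\right)<\infty. \]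
   Context: $[N]=\{1,\dots,N\}$. A probability measure $\mu$ on $\mathbb{R}^N$ is permutation invariant if for every integrable $f$ and every permutation $\pi$ of $[N]$, $f\circ Q_\pi$ is integrable and $\langle f\circ Q_\pi\rangle_\mu=\langle f\rangle_\mu$, where $(Q_\pi x)_j=x_{\pi^{-1}(j)}$. The specific $p$-norm fluctuation distance is $w_p(\mu_1,\mu_2;N)=\left(\inf_\gamma\int\gamma(dx,dy)\frac1N\sum_{i=1}^N|x_i-y_i|^p\right)^{1/p}$, the infimum over all couplings $\gamma$ of $\mu_1$ and $\mu_2$. *)

theory Defs
  imports "HOL-Probability.Probability"
begin

text \<open>Points of R^N are vectors real^'n with N = CARD('n); the index set [N] is UNIV :: 'n set.\<close>

definition Qperm :: "('n \<Rightarrow> 'n) \<Rightarrow> real^'n \<Rightarrow> real^'n" where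
  "Qperm \<pi> x = (\<chi> j. x $ (inv \<pi> j))"

definition perm_invariant :: "(real^'n::finite) measure \<Rightarrow> bool" where
  "perm_invariant \<mu> \<longleftrightarrow>
     (\<forall>\<pi> f. \<pi> permutes (UNIV :: 'n set) \<longrightarrow> integrable \<mu> (f :: real^'n \<Rightarrow> real) \<longrightarrow>
        integrable \<mu> (f \<circ> Qperm \<pi>) \<and> integral\<^sup>L \<mu> (f \<circ> Qperm \<pi>) = integral\<^sup>L \<mu> f)"

text \<open>Borel probability measure on R^N (every such measure is Radon).\<close>
definition borel_prob :: "(real^'n::finite) measure \<Rightarrow> bool" where
  "borel_prob \<mu> \<longleftrightarrow> prob_space \<mu> \<and> sets \<mu> = sets borel"

definition coupling ::
  "((real^'n::finite) \<times> (real^'n)) measure \<Rightarrow> (real^'n) measure \<Rightarrow> (real^'n) measure \<Rightarrow> bool" where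
  "coupling \<gamma> \<mu>1 \<mu>2 \<longleftrightarrow> sets \<gamma> = sets (borel \<Otimes>\<^sub>M borel)
     \<and> distr \<gamma> borel fst = \<mu>1 \<and> distr \<gamma> borel snd = \<mu>2"

definition wp_cost :: "real \<Rightarrow> (real^'n::finite) measure \<Rightarrow> (real^'n) measure \<Rightarrow> ennreal" where
  "wp_cost p \<mu>1 \<mu>2 = (INF \<gamma> \<in> {\<gamma>. coupling \<gamma> \<mu>1 \<mu>2}.
      \<integral>\<^sup>+ z. ennreal ((1 / real CARD('n)) * (\<Sum>i\<in>UNIV. \<bar>fst z $ i - snd z $ i\<bar> powr p)) \<partial>\<gamma>)"

text \<open>w_p(mu1,mu2;N); meaningful when the cost is finite (which holds under finite p-th moments).\<close>
definition wp_dist :: "real \<Rightarrow> (real^'n::finite) measure \<Rightarrow> (real^'n) measure \<Rightarrow> real" where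
  "wp_dist p \<mu>1 \<mu>2 = (enn2real (wp_cost p \<mu>1 \<mu>2)) powr (1 / p)"

definition monomial :: "'n list \<Rightarrow> real^'n \<Rightarrow> real" where
  "monomial J x = (\<Prod>l<length J. x $ (J ! l))"

definition coord_norm :: "(real^'n::finite) measure \<Rightarrow> real \<Rightarrow> 'n \<Rightarrow> real" where
  "coord_norm \<mu> r i = (\<integral>x. \<bar>x $ i\<bar> powr r \<partial>\<mu>) powr (1 / r)"

definition Mconst :: "(real^'n::finite) measure \<Rightarrow> (real^'n) measure \<Rightarrow> 'n list \<Rightarrow> real \<Rightarrow> real" where
  "Mconst \<mu>1 \<mu>2 J p =
     (if length J = 1 then 1
      else (let q = p / (p - 1); r = q * (real (length J) - 1) in
            Max ((\<lambda>i. max (coord_norm \<mu>1 r i) (coord_norm \<mu>2 r i)) ` set J)))"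

end

theory Submission
  imports Defs
begin


lemma holder:
  fixes f g :: "'a \<Rightarrow> real" and p q :: real
  assumes pq: "p > 1" "q > 1" "1/p + 1/q = 1"
    and [measurable]: "f \<in> borel_measurable M" "g \<in> borel_measurable M"
    and fi: "integrable M (\<lambda>x. \<bar>f x\<bar> powr p)" and gi: "integrable M (\<lambda>x. \<bar>g x\<bar> powr q)"
  shows "integrable M (\<lambda>x. f x * g x)"
    "(\<integral>x. \<bar>f x * g x\<bar> \<partial>M) \<le> (\<integral>x. \<bar>f x\<bar> powr p \<partial>M) powr (1/p) * (\<integral>x. \<bar>g x\<bar> powr q \<partial>M) powr (1/q)"
proof -
  have Y: "\<bar>f x * g x\<bar> \<le> \<bar>f x\<bar> powr p / p + \<bar>g x\<bar> powr q / q" for x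
    using Youngs_inequality[OF pq, of "\<bar>f x\<bar>" "\<bar>g x\<bar>"] by (simp add: abs_mult)
  show int: "integrable M (\<lambda>x. f x * g x)"
    by (rule Bochner_Integration.integrable_bound[where f="\<lambda>x. \<bar>f x\<bar> powr p / p + \<bar>g x\<bar> powr q / q"])
       (use fi gi in \<open>auto intro!: AE_I2 order_trans[OF Y abs_ge_self]\<close>)
  define A where "A = (\<integral>x. \<bar>f x\<bar> powr p \<partial>M)"
  define B where "B = (\<integral>x. \<bar>g x\<bar> powr q \<partial>M)"
  have A0: "A \<ge> 0" "B \<ge> 0" unfolding A_def B_def by auto
  show "(\<integral>x. \<bar>f x * g x\<bar> \<partial>M) \<le> A powr (1/p) * B powr (1/q)"
  proof (cases "A = 0 \<or> B = 0")
    case True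
    then have "AE x in M. \<bar>f x * g x\<bar> = 0"
    proof
      assume "A = 0"
      then have "AE x in M. \<bar>f x\<bar> powr p = 0" using fi unfolding A_def
        by (subst integral_nonneg_eq_0_iff_AE[symmetric]) auto
      then show ?thesis by eventually_elim auto
    next
      assume "B = 0"
      then have "AE x in M. \<bar>g x\<bar> powr q = 0" using gi unfolding B_def
        by (subst integral_nonneg_eq_0_iff_AE[symmetric]) auto
      then show ?thesis by eventually_elim auto
    qed
    then have "(\<integral>x. \<bar>f x * g x\<bar> \<partial>M) = (\<integral>x. 0 \<partial>M)"
      by (intro integral_cong_AE) auto
    then show ?thesis using A0 by simp
  next
    case False
    then have Ap: "A > 0" "B > 0" using A0 by auto
    define a where "a = A powr (1/p)"
    define b where "b = B powr (1/q)"
    have ab: "a > 0" "b > 0" using Ap unfolding a_def b_def by auto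
    have ap: "a powr p = A" "b powr q = B" unfolding a_def b_def using Ap pq
      by (auto simp: powr_powr)
    have pt: "\<bar>f x * g x\<bar> / (a * b) \<le> \<bar>f x\<bar> powr p / (p * A) + \<bar>g x\<bar> powr q / (q * B)" for x
    proof -
      have "\<bar>f x * g x\<bar> / (a * b) = (\<bar>f x\<bar> / a) * (\<bar>g x\<bar> / b)" by (simp add: abs_mult)
      also have "\<dots> \<le> (\<bar>f x\<bar> / a) powr p / p + (\<bar>g x\<bar> / b) powr q / q"
        by (rule Youngs_inequality[OF pq]) (use ab in auto)
      also have "\<dots> = \<bar>f x\<bar> powr p / (p * A) + \<bar>g x\<bar> powr q / (q * B)"
        using ab by (simp add: powr_divide ap mult.commute)
      finally show ?thesis .
    qed
    have "(\<integral>x. \<bar>f x * g x\<bar> / (a * b) \<partial>M) \<le> (\<integral>x. \<bar>f x\<bar> powr p / (p * A) + \<bar>g x\<bar> powr q / (q * B) \<partial>M)"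
      by (intro integral_mono pt) (use fi gi int in auto)
    also have "\<dots> = A / (p * A) + B / (q * B)"
      using fi gi by (simp add: A_def B_def)
    also have "\<dots> = 1" using Ap pq by simp
    finally have "(\<integral>x. \<bar>f x * g x\<bar> \<partial>M) / (a * b) \<le> 1" by simp
    then show ?thesis using ab by (simp add: a_def b_def divide_le_eq)
  qed
qed


lemma powr_inv_id: "c \<ge> 0 \<Longrightarrow> t > 0 \<Longrightarrow> (c::real) = (c powr (1/t)) powr t"
  by (simp add: powr_powr)

lemma prod_Lq_int:
  fixes F :: "nat \<Rightarrow> 'a \<Rightarrow> real" and S :: "nat set" and q :: real
  assumes S: "finite S" "card S = m" "m \<ge> 1" and q: "q > 0"
    and meas: "\<And>k. k \<in> S \<Longrightarrow> F k \<in> borel_measurable M"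
    and int: "\<And>k. k \<in> S \<Longrightarrow> integrable M (\<lambda>x. \<bar>F k x\<bar> powr (q * m))"
  shows "integrable M (\<lambda>x. \<bar>\<Prod>k\<in>S. F k x\<bar> powr q)"
proof -
  have pt: "\<bar>\<Prod>k\<in>S. F k x\<bar> powr q \<le> (\<Sum>k\<in>S. \<bar>F k x\<bar> powr (q * m) / m)" for x
  proof -
    have "\<bar>\<Prod>k\<in>S. F k x\<bar> powr q = (\<Prod>k\<in>S. \<bar>F k x\<bar> powr q)"
      by (simp add: abs_prod prod_powr_distrib)
    also have "\<dots> = (\<Prod>k\<in>S. (\<bar>F k x\<bar> powr (q * m)) powr (1 / m))"
      using S by (intro prod.cong) (auto simp: powr_powr)
    also have "\<dots> = (\<Prod>k\<in>S. \<bar>F k x\<bar> powr (q * m)) powr (1 / card S)"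
      using S by (simp add: prod_powr_distrib)
    also have "\<dots> \<le> (\<Sum>k\<in>S. \<bar>F k x\<bar> powr (q * m) / card S)"
      by (rule arith_geom_mean) (use S in auto)
    finally show ?thesis using S by simp
  qed
  have meas2: "(\<lambda>x. \<bar>\<Prod>k\<in>S. F k x\<bar> powr q) \<in> borel_measurable M"
    using meas by measurable
  show int2: "integrable M (\<lambda>x. \<bar>\<Prod>k\<in>S. F k x\<bar> powr q)"
    by (rule Bochner_Integration.integrable_bound[where f="\<lambda>x. (\<Sum>k\<in>S. \<bar>F k x\<bar> powr (q * m) / m)"])
       (use int meas2 in \<open>auto intro!: AE_I2 order_trans[OF pt abs_ge_self]\<close>)
qed

lemma prod_Lq:
  fixes F :: "nat \<Rightarrow> 'a \<Rightarrow> real" and S :: "nat set" and q \<beta> :: real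
  assumes S: "finite S" "card S = m" "m \<ge> 1" and q: "q > 0" and b: "\<beta> \<ge> 0"
    and meas: "\<And>k. k \<in> S \<Longrightarrow> F k \<in> borel_measurable M"
    and int: "\<And>k. k \<in> S \<Longrightarrow> integrable M (\<lambda>x. \<bar>F k x\<bar> powr (q * m))"
    and bnd: "\<And>k. k \<in> S \<Longrightarrow> (\<integral>x. \<bar>F k x\<bar> powr (q * m) \<partial>M) powr (1 / (q * m)) \<le> \<beta>"
  shows "integrable M (\<lambda>x. \<bar>\<Prod>k\<in>S. F k x\<bar> powr q)"
    "(\<integral>x. \<bar>\<Prod>k\<in>S. F k x\<bar> powr q \<partial>M) powr (1/q) \<le> \<beta> ^ m"
proof -
  have Sne: "S \<noteq> {}" using S by auto
  have qm: "q * m > 0" using q S by auto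
  have pt: "\<bar>\<Prod>k\<in>S. F k x\<bar> powr q \<le> (\<Sum>k\<in>S. \<bar>F k x\<bar> powr (q * m) / m)" for x
  proof -
    have "\<bar>\<Prod>k\<in>S. F k x\<bar> powr q = (\<Prod>k\<in>S. \<bar>F k x\<bar> powr q)"
      by (simp add: abs_prod prod_powr_distrib)
    also have "\<dots> = (\<Prod>k\<in>S. (\<bar>F k x\<bar> powr (q * m)) powr (1 / m))"
      using S by (intro prod.cong) (auto simp: powr_powr)
    also have "\<dots> = (\<Prod>k\<in>S. \<bar>F k x\<bar> powr (q * m)) powr (1 / card S)"
      using S by (simp add: prod_powr_distrib)
    also have "\<dots> \<le> (\<Sum>k\<in>S. \<bar>F k x\<bar> powr (q * m) / card S)"
      by (rule arith_geom_mean) (use S in auto)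
    finally show ?thesis using S by simp
  qed
  have meas2: "(\<lambda>x. \<bar>\<Prod>k\<in>S. F k x\<bar> powr q) \<in> borel_measurable M"
    using meas by measurable
  show int2: "integrable M (\<lambda>x. \<bar>\<Prod>k\<in>S. F k x\<bar> powr q)"
    by (rule Bochner_Integration.integrable_bound[where f="\<lambda>x. (\<Sum>k\<in>S. \<bar>F k x\<bar> powr (q * m) / m)"])
       (use int meas2 in \<open>auto intro!: AE_I2 order_trans[OF pt abs_ge_self]\<close>)
  have ib: "(\<integral>x. \<bar>F k x\<bar> powr (q * m) \<partial>M) \<le> \<beta> powr (q * m)" if k: "k \<in> S" for k
  proof -
    have "(\<integral>x. \<bar>F k x\<bar> powr (q * m) \<partial>M) = ((\<integral>x. \<bar>F k x\<bar> powr (q * m) \<partial>M) powr (1 / (q * m))) powr (q * m)"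
      using qm by (intro powr_inv_id) auto
    also have "\<dots> \<le> \<beta> powr (q * m)"
      by (rule powr_mono2) (use qm bnd[OF k] in auto)
    finally show ?thesis .
  qed
  have "(\<integral>x. \<bar>\<Prod>k\<in>S. F k x\<bar> powr q \<partial>M) \<le> (\<integral>x. (\<Sum>k\<in>S. \<bar>F k x\<bar> powr (q * m) / m) \<partial>M)"
    by (intro integral_mono pt int2) (use int in auto)
  also have "\<dots> = (\<Sum>k\<in>S. (\<integral>x. \<bar>F k x\<bar> powr (q * m) \<partial>M) / m)"
    using int by (simp add: Bochner_Integration.integral_sum)
  also have "\<dots> \<le> (\<Sum>k\<in>S. \<beta> powr (q * m) / m)"
    by (intro sum_mono divide_right_mono ib) auto
  also have "\<dots> = \<beta> powr (q * m)" using S by simp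
  finally have I: "(\<integral>x. \<bar>\<Prod>k\<in>S. F k x\<bar> powr q \<partial>M) \<le> \<beta> powr (q * m)" .
  have "(\<integral>x. \<bar>\<Prod>k\<in>S. F k x\<bar> powr q \<partial>M) powr (1/q) \<le> (\<beta> powr (q * m)) powr (1/q)"
    by (rule powr_mono2) (use q I in auto)
  also have "\<dots> = \<beta> powr m" using q by (simp add: powr_powr)
  also have "\<dots> = \<beta> ^ m"
  proof (cases "\<beta> = 0")
    case True then show ?thesis using S by simp
  next
    case False then show ?thesis using b by (simp add: powr_realpow)
  qed
  finally show "(\<integral>x. \<bar>\<Prod>k\<in>S. F k x\<bar> powr q \<partial>M) powr (1/q) \<le> \<beta> ^ m" .
qed


lemma telescope:
  fixes a b :: "nat \<Rightarrow> real"
  shows "(\<Prod>l<n. a l) - (\<Prod>l<n. b l) = (\<Sum>l<n. (a l - b l) * (\<Prod>k\<in>{..<n}-{l}. if k < l then a k else b k))"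
proof (induction n)
  case 0 then show ?case by simp
next
  case (Suc n)
  have e1: "(\<Prod>k\<in>{..<Suc n}-{l}. if k < l then a k else b k) = b n * (\<Prod>k\<in>{..<n}-{l}. if k < l then a k else b k)"
    if "l < n" for l
  proof -
    have "{..<Suc n}-{l} = insert n ({..<n}-{l})" using that by auto
    then show ?thesis using that by simp
  qed
  have e2: "(\<Prod>k\<in>{..<Suc n}-{n}. if k < n then a k else b k) = (\<Prod>k<n. a k)"
  proof -
    have "{..<Suc n}-{n} = {..<n}" by auto
    then show ?thesis by simp
  qed
  have "(\<Sum>l<Suc n. (a l - b l) * (\<Prod>k\<in>{..<Suc n}-{l}. if k < l then a k else b k))
     = (\<Sum>l<n. (a l - b l) * (\<Prod>k\<in>{..<Suc n}-{l}. if k < l then a k else b k)) + (a n - b n) * (\<Prod>k<n. a k)"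
    using e2 by simp
  also have "(\<Sum>l<n. (a l - b l) * (\<Prod>k\<in>{..<Suc n}-{l}. if k < l then a k else b k))
     = b n * (\<Sum>l<n. (a l - b l) * (\<Prod>k\<in>{..<n}-{l}. if k < l then a k else b k))"
    by (simp add: e1 sum_distrib_left algebra_simps)
  finally show ?case using Suc by (simp add: algebra_simps)
qed


lemma vec_nth_meas[measurable]: "(\<lambda>x::real^'n. x $ i) \<in> borel_measurable borel"
  by (intro borel_measurable_continuous_onI continuous_intros)

lemma coupling_meas:
  assumes "coupling \<gamma> \<mu>1 \<mu>2"
  shows "fst \<in> measurable \<gamma> borel" "snd \<in> measurable \<gamma> borel"
proof -
  have s: "sets \<gamma> = sets (borel \<Otimes>\<^sub>M borel)" using assms unfolding coupling_def by simp
  show "fst \<in> measurable \<gamma> borel"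
    using measurable_cong_sets[OF s refl] measurable_fst by blast
  show "snd \<in> measurable \<gamma> borel"
    using measurable_cong_sets[OF s refl] measurable_snd by blast
qed

lemma coupling_fst:
  assumes "coupling \<gamma> \<mu>1 \<mu>2" and h: "h \<in> borel_measurable borel"
  shows "integrable \<gamma> (\<lambda>z. h (fst z)) \<longleftrightarrow> integrable \<mu>1 (h :: real^'n::finite \<Rightarrow> real)"
    "(\<integral>z. h (fst z) \<partial>\<gamma>) = (\<integral>x. h x \<partial>\<mu>1)"
proof -
  have m: "fst \<in> measurable \<gamma> borel" using coupling_meas[OF assms(1)] by simp
  have e: "\<mu>1 = distr \<gamma> borel fst" using assms(1) unfolding coupling_def by simp
  show "integrable \<gamma> (\<lambda>z. h (fst z)) \<longleftrightarrow> integrable \<mu>1 h"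
    unfolding e using integrable_distr_eq[OF m h] by simp
  show "(\<integral>z. h (fst z) \<partial>\<gamma>) = (\<integral>x. h x \<partial>\<mu>1)"
    unfolding e using integral_distr[OF m h] by simp
qed

lemma coupling_snd:
  assumes "coupling \<gamma> \<mu>1 \<mu>2" and h: "h \<in> borel_measurable borel"
  shows "integrable \<gamma> (\<lambda>z. h (snd z)) \<longleftrightarrow> integrable \<mu>2 (h :: real^'n::finite \<Rightarrow> real)"
    "(\<integral>z. h (snd z) \<partial>\<gamma>) = (\<integral>x. h x \<partial>\<mu>2)"
proof -
  have m: "snd \<in> measurable \<gamma> borel" using coupling_meas[OF assms(1)] by simp
  have e: "\<mu>2 = distr \<gamma> borel snd" using assms(1) unfolding coupling_def by simp
  show "integrable \<gamma> (\<lambda>z. h (snd z)) \<longleftrightarrow> integrable \<mu>2 h"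
    unfolding e using integrable_distr_eq[OF m h] by simp
  show "(\<integral>z. h (snd z) \<partial>\<gamma>) = (\<integral>x. h x \<partial>\<mu>2)"
    unfolding e using integral_distr[OF m h] by simp
qed

lemma coupling_prob:
  assumes "coupling \<gamma> \<mu>1 \<mu>2" "borel_prob \<mu>1"
  shows "prob_space \<gamma>"
proof (rule prob_spaceI)
  have m: "fst \<in> measurable \<gamma> borel" using coupling_meas[OF assms(1)] by simp
  have e: "\<mu>1 = distr \<gamma> borel fst" using assms(1) unfolding coupling_def by simp
  have "emeasure \<mu>1 (space \<mu>1) = 1" using assms(2) unfolding borel_prob_def
    by (simp add: prob_space.emeasure_space_1)
  then have "emeasure (distr \<gamma> borel fst) UNIV = 1" using e by simp
  then show "emeasure \<gamma> (space \<gamma>) = 1"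
    using emeasure_distr[OF m, of UNIV] m by (simp add: vimage_def measurable_space)
qed



lemma pow_le1: "0 \<le> s \<Longrightarrow> s \<le> t \<Longrightarrow> \<bar>a::real\<bar> powr s \<le> 1 + \<bar>a\<bar> powr t"
proof (cases "\<bar>a\<bar> \<le> 1")
  case True
  assume "0 \<le> s" "s \<le> t"
  then have "\<bar>a\<bar> powr s \<le> 1"
    using True by (cases "a = 0") (auto intro: powr_le1)
  then show ?thesis by (smt (verit) powr_ge_zero)
next
  case False
  assume "0 \<le> s" "s \<le> t"
  then have "\<bar>a\<bar> powr s \<le> \<bar>a\<bar> powr t" using False by (intro powr_mono) auto
  then show ?thesis by simp
qed

lemma mom_int:
  assumes "prob_space M" "h \<in> borel_measurable M" "integrable M (\<lambda>x. \<bar>h x\<bar> powr t)" "0 \<le> s" "s \<le> t"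
  shows "integrable M (\<lambda>x. \<bar>h x :: real\<bar> powr s)"
proof (rule Bochner_Integration.integrable_bound[where f="\<lambda>x. 1 + \<bar>h x\<bar> powr t"])
  show "integrable M (\<lambda>x. 1 + \<bar>h x\<bar> powr t)"
    using assms by (intro Bochner_Integration.integrable_add) (auto simp: finite_measure.integrable_const prob_space.finite_measure)
  show "(\<lambda>x. \<bar>h x\<bar> powr s) \<in> borel_measurable M" using assms(2) by measurable
  show "AE x in M. norm (\<bar>h x\<bar> powr s) \<le> norm (1 + \<bar>h x\<bar> powr t)"
    using pow_le1[OF assms(4,5)] by (intro AE_I2) (smt (verit) powr_ge_zero real_norm_def)
qed

lemma diff_pow: "p \<ge> 0 \<Longrightarrow> \<bar>a - b::real\<bar> powr p \<le> 2 powr p * (\<bar>a\<bar> powr p + \<bar>b\<bar> powr p)"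
proof -
  assume p: "p \<ge> 0"
  have "\<bar>a - b\<bar> \<le> 2 * max \<bar>a\<bar> \<bar>b\<bar>" by auto
  then have "\<bar>a - b\<bar> powr p \<le> (2 * max \<bar>a\<bar> \<bar>b\<bar>) powr p" using p by (intro powr_mono2) auto
  also have "\<dots> = 2 powr p * max \<bar>a\<bar> \<bar>b\<bar> powr p" by (simp add: powr_mult)
  also have "max \<bar>a\<bar> \<bar>b\<bar> powr p \<le> \<bar>a\<bar> powr p + \<bar>b\<bar> powr p"
    by (cases "\<bar>a\<bar> \<le> \<bar>b\<bar>") (auto simp: max_def)
  finally show ?thesis by (smt (verit) mult_left_mono powr_ge_zero)
qed

lemma mono_int:
  fixes \<mu> :: "(real^'n::finite) measure" and L :: "'n list"
  assumes ps: "prob_space \<mu>" and sb: "sets \<mu> = sets borel"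
    and mom: "\<And>i s. 0 \<le> s \<Longrightarrow> s \<le> p0 \<Longrightarrow> integrable \<mu> (\<lambda>x. \<bar>x$i\<bar> powr s)"
    and np0: "real (length L) \<le> p0"
  shows "integrable \<mu> (monomial L)"
proof (cases "length L = 0")
  case True
  then have "monomial L = (\<lambda>x. 1)" by (simp add: monomial_def fun_eq_iff)
  then show ?thesis using ps by (simp add: finite_measure.integrable_const prob_space.finite_measure)
next
  case False
  have [measurable]: "(\<lambda>x. x $ i) \<in> borel_measurable \<mu>" for i
    using measurable_cong_sets[OF sb refl] vec_nth_meas by blast
  have "integrable \<mu> (\<lambda>x. \<bar>\<Prod>k\<in>{..<length L}. x $ (L!k)\<bar> powr 1)"
    by (rule prod_Lq_int[where m="length L"]) (use False np0 in \<open>auto intro!: mom simp: Suc_le_eq\<close>)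
  then have "integrable \<mu> (\<lambda>x. \<bar>\<Prod>k\<in>{..<length L}. x $ (L!k)\<bar>)" by simp
  then show ?thesis unfolding monomial_def
    by (subst integrable_abs_iff[symmetric]) auto
qed



lemma per_coupling:
  fixes \<mu>1 \<mu>2 :: "(real^'n::finite) measure" and L :: "'n list"
  assumes p: "p > 1" and b1: "borel_prob \<mu>1" and b2: "borel_prob \<mu>2" and c: "coupling \<gamma> \<mu>1 \<mu>2"
    and mom1: "\<And>i s. 0 \<le> s \<Longrightarrow> s \<le> p0 \<Longrightarrow> integrable \<mu>1 (\<lambda>x. \<bar>x$i\<bar> powr s)"
    and mom2: "\<And>i s. 0 \<le> s \<Longrightarrow> s \<le> p0 \<Longrightarrow> integrable \<mu>2 (\<lambda>x. \<bar>x$i\<bar> powr s)"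
    and pp0: "p \<le> p0" and n: "length L = n" "n \<ge> 1" and np0: "real n \<le> p0"
    and rp0: "p/(p-1) * (real n - 1) \<le> p0"
    and \<beta>: "\<beta> \<ge> 0"
    and bnd: "\<And>i. n \<ge> 2 \<Longrightarrow> i \<in> set L \<Longrightarrow> coord_norm \<mu>1 (p/(p-1) * (real n - 1)) i \<le> \<beta> \<and> coord_norm \<mu>2 (p/(p-1) * (real n - 1)) i \<le> \<beta>"
  shows "\<bar>(\<integral>x. monomial L x \<partial>\<mu>1) - (\<integral>x. monomial L x \<partial>\<mu>2)\<bar>
     \<le> \<beta>^(n-1) * (\<Sum>l<n. (\<integral>z. \<bar>fst z $ (L!l) - snd z $ (L!l)\<bar> powr p \<partial>\<gamma>) powr (1/p))"
proof -
  define q where "q = p/(p-1)"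
  have q: "q > 1" "1/p + 1/q = 1" using p unfolding q_def by (auto simp: field_simps)
  have P1: "prob_space \<mu>1" and S1: "sets \<mu>1 = sets borel" using b1 unfolding borel_prob_def by auto
  have P2: "prob_space \<mu>2" and S2: "sets \<mu>2 = sets borel" using b2 unfolding borel_prob_def by auto
  have Pg: "prob_space \<gamma>" by (rule coupling_prob[OF c b1])
  have [measurable]: "fst \<in> measurable \<gamma> borel" "snd \<in> measurable \<gamma> borel"
    using coupling_meas[OF c] by auto
  define a where "a l z = fst z $ (L!l)" for l and z :: "(real^'n) \<times> (real^'n)"
  define b where "b l z = snd z $ (L!l)" for l and z :: "(real^'n) \<times> (real^'n)"
  have [measurable]: "a l \<in> borel_measurable \<gamma>" "b l \<in> borel_measurable \<gamma>" for l
    unfolding a_def b_def by measurable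
  define F where "F l k = (if k < l then a k else b k)" for l k
  have [measurable]: "F l k \<in> borel_measurable \<gamma>" for l k unfolding F_def by auto
  have Fz: "F l k z = (if k < l then a k z else b k z)" for l k z by (simp add: F_def)
  define P where "P l z = (\<Prod>k\<in>{..<n}-{l}. F l k z)" for l z
  have [measurable]: "P l \<in> borel_measurable \<gamma>" for l unfolding P_def by measurable
  define T where "T l z = (a l z - b l z) * P l z" for l z
  have tel: "monomial L (fst z) - monomial L (snd z) = (\<Sum>l<n. T l z)" for z
    unfolding monomial_def T_def P_def Fz n(1)
    using telescope[of "\<lambda>l. fst z $ (L!l)" n "\<lambda>l. snd z $ (L!l)"]
    by (simp add: a_def b_def cong: if_cong)
  have r_eq: "q * real (n - 1) = p/(p-1) * (real n - 1)" using n unfolding q_def by (simp add: of_nat_diff)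
  have r0: "0 \<le> q * real (n - 1)" using q by auto
  have Pbnd: "integrable \<gamma> (\<lambda>z. \<bar>P l z\<bar> powr q) \<and> (\<integral>z. \<bar>P l z\<bar> powr q \<partial>\<gamma>) powr (1/q) \<le> \<beta>^(n-1)"
    if l: "l < n" for l
  proof (cases "n = 1")
    case True
    then have "{..<n}-{l} = {}" using l by auto
    then have "P l = (\<lambda>z. 1)" unfolding P_def by (intro ext) (simp only: prod.empty)
    then show ?thesis using Pg True
      by (simp add: finite_measure.integrable_const prob_space.finite_measure prob_space.prob_space)
  next
    case False
    then have n2: "n \<ge> 2" using n by auto
    have cS: "card ({..<n}-{l}) = n - 1" using l by simp
    have Fint: "integrable \<gamma> (\<lambda>z. \<bar>F l k z\<bar> powr (q * real (n - 1)))"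
     and Fb: "(\<integral>z. \<bar>F l k z\<bar> powr (q * real (n - 1)) \<partial>\<gamma>) powr (1 / (q * real (n - 1))) \<le> \<beta>"
      if k: "k \<in> {..<n}-{l}" for k
    proof -
      have kL: "L!k \<in> set L" using k n by auto
      have hm: "(\<lambda>x::real^'n. \<bar>x $ (L!k)\<bar> powr (q * real (n - 1))) \<in> borel_measurable borel"
        by measurable
      have i1: "integrable \<mu>1 (\<lambda>x. \<bar>x $ (L!k)\<bar> powr (q * real (n - 1)))"
        using mom1 r0 rp0 r_eq by auto
      have i2: "integrable \<mu>2 (\<lambda>x. \<bar>x $ (L!k)\<bar> powr (q * real (n - 1)))"
        using mom2 r0 rp0 r_eq by auto
      have c1: "coord_norm \<mu>1 (q * real (n - 1)) (L!k) \<le> \<beta>" "coord_norm \<mu>2 (q * real (n - 1)) (L!k) \<le> \<beta>"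
        using bnd[OF n2 kL] r_eq by auto
      show "integrable \<gamma> (\<lambda>z. \<bar>F l k z\<bar> powr (q * real (n - 1)))"
        using coupling_fst(1)[OF c hm] coupling_snd(1)[OF c hm] i1 i2
        unfolding F_def a_def b_def by auto
      show "(\<integral>z. \<bar>F l k z\<bar> powr (q * real (n - 1)) \<partial>\<gamma>) powr (1 / (q * real (n - 1))) \<le> \<beta>"
        using coupling_fst(2)[OF c hm] coupling_snd(2)[OF c hm] c1
        unfolding F_def a_def b_def coord_norm_def by auto
    qed
    have "integrable \<gamma> (\<lambda>z. \<bar>\<Prod>k\<in>{..<n}-{l}. F l k z\<bar> powr q)"
      "(\<integral>z. \<bar>\<Prod>k\<in>{..<n}-{l}. F l k z\<bar> powr q \<partial>\<gamma>) powr (1/q) \<le> \<beta> ^ (n - 1)"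
      by (rule prod_Lq[where m="n-1"]; (use cS n2 q \<beta> Fint Fb in auto)?)+
    then show ?thesis unfolding P_def by simp
  qed
  have Dint: "integrable \<gamma> (\<lambda>z. \<bar>a l z - b l z\<bar> powr p)" for l
  proof (rule Bochner_Integration.integrable_bound[where f="\<lambda>z. 2 powr p * (\<bar>a l z\<bar> powr p + \<bar>b l z\<bar> powr p)"])
    have hm: "(\<lambda>x::real^'n. \<bar>x $ (L!l)\<bar> powr p) \<in> borel_measurable borel" by measurable
    have "integrable \<gamma> (\<lambda>z. \<bar>a l z\<bar> powr p)" "integrable \<gamma> (\<lambda>z. \<bar>b l z\<bar> powr p)"
      using coupling_fst(1)[OF c hm] coupling_snd(1)[OF c hm] mom1 mom2 pp0 p
      unfolding a_def b_def by auto
    then show "integrable \<gamma> (\<lambda>z. 2 powr p * (\<bar>a l z\<bar> powr p + \<bar>b l z\<bar> powr p))" by auto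
    show "(\<lambda>z. \<bar>a l z - b l z\<bar> powr p) \<in> borel_measurable \<gamma>" by measurable
    show "AE z in \<gamma>. norm (\<bar>a l z - b l z\<bar> powr p) \<le> norm (2 powr p * (\<bar>a l z\<bar> powr p + \<bar>b l z\<bar> powr p))"
      using diff_pow[of p] p by (intro AE_I2) (smt (verit) powr_ge_zero real_norm_def)
  qed
  have Tb: "integrable \<gamma> (T l) \<and> (\<integral>z. \<bar>T l z\<bar> \<partial>\<gamma>) \<le> (\<integral>z. \<bar>a l z - b l z\<bar> powr p \<partial>\<gamma>) powr (1/p) * \<beta>^(n-1)"
    if l: "l < n" for l
  proof -
    have h1: "integrable \<gamma> (\<lambda>z. (a l z - b l z) * P l z)"
      and h2: "(\<integral>z. \<bar>(a l z - b l z) * P l z\<bar> \<partial>\<gamma>) \<le> (\<integral>z. \<bar>a l z - b l z\<bar> powr p \<partial>\<gamma>) powr (1/p) * (\<integral>z. \<bar>P l z\<bar> powr q \<partial>\<gamma>) powr (1/q)"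
      using holder[OF p q(1) q(2), of "\<lambda>z. a l z - b l z" \<gamma> "P l"] Dint Pbnd[OF l] by auto
    have "(\<integral>z. \<bar>a l z - b l z\<bar> powr p \<partial>\<gamma>) powr (1/p) * (\<integral>z. \<bar>P l z\<bar> powr q \<partial>\<gamma>) powr (1/q)
        \<le> (\<integral>z. \<bar>a l z - b l z\<bar> powr p \<partial>\<gamma>) powr (1/p) * \<beta>^(n-1)"
      using Pbnd[OF l] by (intro mult_left_mono) auto
    then show ?thesis using h1 h2 unfolding T_def by auto
  qed
  have hm: "monomial L \<in> borel_measurable borel" unfolding monomial_def by measurable
  have m1: "integrable \<gamma> (\<lambda>z. monomial L (fst z))"
    using coupling_fst(1)[OF c hm] mono_int[OF P1 S1 mom1] np0 n by auto
  have m2: "integrable \<gamma> (\<lambda>z. monomial L (snd z))"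
    using coupling_snd(1)[OF c hm] mono_int[OF P2 S2 mom2] np0 n by auto
  have "(\<integral>x. monomial L x \<partial>\<mu>1) - (\<integral>x. monomial L x \<partial>\<mu>2)
      = (\<integral>z. monomial L (fst z) - monomial L (snd z) \<partial>\<gamma>)"
    using coupling_fst(2)[OF c hm] coupling_snd(2)[OF c hm] m1 m2 by simp
  also have "\<dots> = (\<integral>z. (\<Sum>l<n. T l z) \<partial>\<gamma>)" by (simp add: tel)
  also have "\<dots> = (\<Sum>l<n. (\<integral>z. T l z \<partial>\<gamma>))"
    using Tb by (intro Bochner_Integration.integral_sum) auto
  finally have eq: "(\<integral>x. monomial L x \<partial>\<mu>1) - (\<integral>x. monomial L x \<partial>\<mu>2) = (\<Sum>l<n. (\<integral>z. T l z \<partial>\<gamma>))" .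
  have "\<bar>\<Sum>l<n. (\<integral>z. T l z \<partial>\<gamma>)\<bar> \<le> (\<Sum>l<n. \<bar>\<integral>z. T l z \<partial>\<gamma>\<bar>)" by (rule sum_abs)
  also have "\<dots> \<le> (\<Sum>l<n. (\<integral>z. \<bar>a l z - b l z\<bar> powr p \<partial>\<gamma>) powr (1/p) * \<beta>^(n-1))"
  proof (rule sum_mono)
    fix l assume "l \<in> {..<n}"
    then have "integrable \<gamma> (T l)" "(\<integral>z. \<bar>T l z\<bar> \<partial>\<gamma>) \<le> (\<integral>z. \<bar>a l z - b l z\<bar> powr p \<partial>\<gamma>) powr (1/p) * \<beta>^(n-1)"
      using Tb by auto
    moreover have "\<bar>\<integral>z. T l z \<partial>\<gamma>\<bar> \<le> (\<integral>z. \<bar>T l z\<bar> \<partial>\<gamma>)"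
      using integral_abs_bound[of \<gamma> "T l"] by simp
    ultimately show "\<bar>\<integral>z. T l z \<partial>\<gamma>\<bar> \<le> (\<integral>z. \<bar>a l z - b l z\<bar> powr p \<partial>\<gamma>) powr (1/p) * \<beta>^(n-1)"
      by linarith
  qed
  also have "\<dots> = \<beta>^(n-1) * (\<Sum>l<n. (\<integral>z. \<bar>fst z $ (L!l) - snd z $ (L!l)\<bar> powr p \<partial>\<gamma>) powr (1/p))"
    by (simp add: sum_distrib_left mult.commute a_def b_def)
  finally show ?thesis using eq by simp
qed



lemma perm_sum_shift:
  fixes g :: "'n::finite \<Rightarrow> real"
  shows "(\<Sum>\<sigma>\<in>{\<sigma>. \<sigma> permutes (UNIV::'n set)}. g (\<sigma> j)) = (\<Sum>\<sigma>\<in>{\<sigma>. \<sigma> permutes (UNIV::'n set)}. g (\<sigma> j'))"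
  by (rule sum.reindex_bij_witness[where i="\<lambda>\<sigma>. \<sigma> \<circ> Transposition.transpose j j'" and j="\<lambda>\<sigma>. \<sigma> \<circ> Transposition.transpose j j'"])
     (auto simp: comp_assoc intro!: permutes_compose permutes_swap_id)

lemma perm_avg:
  fixes g :: "'n::finite \<Rightarrow> real"
  shows "real CARD('n) * (\<Sum>\<sigma>\<in>{\<sigma>. \<sigma> permutes (UNIV::'n set)}. g (\<sigma> j))
       = real (card {\<sigma>. \<sigma> permutes (UNIV::'n set)}) * (\<Sum>i\<in>UNIV. g i)"
proof -
  let ?P = "{\<sigma>. \<sigma> permutes (UNIV::'n set)}"
  have "real CARD('n) * (\<Sum>\<sigma>\<in>?P. g (\<sigma> j)) = (\<Sum>j'\<in>UNIV. (\<Sum>\<sigma>\<in>?P. g (\<sigma> j')))"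
  proof -
    have "(\<Sum>j'\<in>UNIV. (\<Sum>\<sigma>\<in>?P. g (\<sigma> j'))) = (\<Sum>j'\<in>(UNIV::'n set). (\<Sum>\<sigma>\<in>?P. g (\<sigma> j)))"
      by (rule sum.cong[OF refl]) (rule perm_sum_shift)
    then show ?thesis by simp
  qed
  also have "\<dots> = (\<Sum>\<sigma>\<in>?P. (\<Sum>j'\<in>UNIV. g (\<sigma> j')))" by (rule sum.swap)
  also have "\<dots> = (\<Sum>\<sigma>\<in>?P. (\<Sum>i\<in>UNIV. g i))"
  proof (rule sum.cong[OF refl])
    fix \<sigma> assume "\<sigma> \<in> ?P"
    then have "\<sigma> permutes UNIV" by simp
    then show "(\<Sum>j'\<in>UNIV. g (\<sigma> j')) = (\<Sum>i\<in>UNIV. g i)"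
      using sum.permute[of \<sigma> UNIV g] by (simp add: comp_def)
  qed
  also have "\<dots> = real (card ?P) * (\<Sum>i\<in>UNIV. g i)" by simp
  finally show ?thesis .
qed

lemma power_mean:
  fixes a :: "'n::finite \<Rightarrow> real"
  assumes p: "p > 1" and a: "\<And>i. a i \<ge> 0"
  shows "(\<Sum>i\<in>UNIV. a i) / real CARD('n) \<le> ((\<Sum>i\<in>UNIV. a i powr p) / real CARD('n)) powr (1/p)"
proof -
  define q where "q = p/(p-1)"
  have q: "q > 1" "1/p + 1/q = 1" using p unfolding q_def by (auto simp: field_simps)
  let ?N = "real CARD('n)"
  let ?S = "(\<Sum>i\<in>UNIV. a i powr p)"
  have N: "?N > 0" by simp
  note H = holder(2)[OF p q(1) q(2), where f=a and g="\<lambda>_. 1" and M="count_space UNIV"]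
  have h2: "(\<Sum>i\<in>UNIV. a i) \<le> ?S powr (1/p) * ?N powr (1/q)"
    using H a by (simp add: integrable_count_space lebesgue_integral_count_space_finite)
  have e: "?N powr (1/p) * ?N powr (1/q) = ?N" using q N by (simp add: powr_add[symmetric])
  have "(\<Sum>i\<in>UNIV. a i) / ?N \<le> ?S powr (1/p) * ?N powr (1/q) / ?N"
    using h2 N by (simp add: divide_right_mono)
  also have "\<dots> = ?S powr (1/p) / ?N powr (1/p)"
    using e N by (simp add: field_simps)
  also have "\<dots> = (?S / ?N) powr (1/p)"
    using a N by (simp add: powr_divide sum_nonneg)
  finally show ?thesis .
qed


lemma prod_coupling:
  fixes \<mu>1 \<mu>2 :: "(real^'n::finite) measure"
  assumes b1: "borel_prob \<mu>1" and b2: "borel_prob \<mu>2"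
  shows "coupling (\<mu>1 \<Otimes>\<^sub>M \<mu>2) \<mu>1 \<mu>2"
proof -
  have P1: "prob_space \<mu>1" and S1: "sets \<mu>1 = sets borel" using b1 unfolding borel_prob_def by auto
  have P2: "prob_space \<mu>2" and S2: "sets \<mu>2 = sets borel" using b2 unfolding borel_prob_def by auto
  have sp1: "space \<mu>1 = UNIV" using sets_eq_imp_space_eq[OF S1] by simp
  have sp2: "space \<mu>2 = UNIV" using sets_eq_imp_space_eq[OF S2] by simp
  have s: "sets (\<mu>1 \<Otimes>\<^sub>M \<mu>2) = sets (borel \<Otimes>\<^sub>M borel)"
    by (rule sets_pair_measure_cong[OF S1 S2])
  have d1: "distr (\<mu>1 \<Otimes>\<^sub>M \<mu>2) borel fst = \<mu>1"
  proof -
    have "distr (\<mu>1 \<Otimes>\<^sub>M \<mu>2) borel fst = distr (\<mu>1 \<Otimes>\<^sub>M \<mu>2) \<mu>1 fst"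
      by (rule distr_cong) (use S1 in auto)
    also have "\<dots> = \<mu>1" by (rule prob_space.distr_pair_fst[OF P2])
    finally show ?thesis .
  qed
  have d2: "distr (\<mu>1 \<Otimes>\<^sub>M \<mu>2) borel snd = \<mu>2"
  proof (rule measure_eqI)
    show "sets (distr (\<mu>1 \<Otimes>\<^sub>M \<mu>2) borel snd) = sets \<mu>2" using S2 by simp
    fix A assume A: "A \<in> sets (distr (\<mu>1 \<Otimes>\<^sub>M \<mu>2) borel snd)"
    then have A2: "A \<in> sets \<mu>2" using S2 by simp
    have m: "snd \<in> measurable (\<mu>1 \<Otimes>\<^sub>M \<mu>2) borel"
      using measurable_snd measurable_cong_sets[OF refl S2] by blast
    have "emeasure (distr (\<mu>1 \<Otimes>\<^sub>M \<mu>2) borel snd) A = emeasure (\<mu>1 \<Otimes>\<^sub>M \<mu>2) (snd -` A \<inter> space (\<mu>1 \<Otimes>\<^sub>M \<mu>2))"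
      using A m by (simp add: emeasure_distr)
    also have "snd -` A \<inter> space (\<mu>1 \<Otimes>\<^sub>M \<mu>2) = space \<mu>1 \<times> A"
      by (auto simp: space_pair_measure sp1 sp2)
    also have "emeasure (\<mu>1 \<Otimes>\<^sub>M \<mu>2) (space \<mu>1 \<times> A) = emeasure \<mu>1 (space \<mu>1) * emeasure \<mu>2 A"
      using A2 prob_space_imp_sigma_finite[OF P2]
      by (intro sigma_finite_measure.emeasure_pair_measure_Times) auto
    also have "\<dots> = emeasure \<mu>2 A" using P1 by (simp add: prob_space.emeasure_space_1)
    finally show "emeasure (distr (\<mu>1 \<Otimes>\<^sub>M \<mu>2) borel snd) A = emeasure \<mu>2 A" .
  qed
  show ?thesis unfolding coupling_def using s d1 d2 by simp
qed

lemma Qperm_inv_nth: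
  assumes "\<sigma> permutes (UNIV :: 'n set)"
  shows "Qperm (inv \<sigma>) x $ j = (x :: real^'n::finite) $ (\<sigma> j)"
  using assms by (simp add: Qperm_def inv_inv_eq permutes_bij)

lemma perm_integral:
  fixes \<mu> :: "(real^'n::finite) measure" and f :: "real^'n \<Rightarrow> real"
  assumes "perm_invariant \<mu>" "\<sigma> permutes (UNIV :: 'n set)" "integrable \<mu> f"
  shows "integrable \<mu> (\<lambda>x. f (Qperm (inv \<sigma>) x))" "(\<integral>x. f (Qperm (inv \<sigma>) x) \<partial>\<mu>) = (\<integral>x. f x \<partial>\<mu>)"
proof -
  have "inv \<sigma> permutes UNIV" using assms(2) by (rule permutes_inv)
  then have "integrable \<mu> (f \<circ> Qperm (inv \<sigma>)) \<and> integral\<^sup>L \<mu> (f \<circ> Qperm (inv \<sigma>)) = integral\<^sup>L \<mu> f"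
    using assms(1,3) unfolding perm_invariant_def by blast
  then show "integrable \<mu> (\<lambda>x. f (Qperm (inv \<sigma>) x))" "(\<integral>x. f (Qperm (inv \<sigma>) x) \<partial>\<mu>) = (\<integral>x. f x \<partial>\<mu>)"
    by (simp_all add: comp_def)
qed

lemma mono_perm:
  assumes "\<sigma> permutes (UNIV :: 'n set)"
  shows "monomial J (Qperm (inv \<sigma>) x) = monomial (map \<sigma> J) (x :: real^'n::finite)"
  using assms by (simp add: monomial_def Qperm_inv_nth)

lemma diff_int:
  fixes \<mu>1 \<mu>2 :: "(real^'n::finite) measure"
  assumes c: "coupling \<gamma> \<mu>1 \<mu>2" and p: "p \<ge> 0"
    and m1: "integrable \<mu>1 (\<lambda>x. \<bar>x$i\<bar> powr p)" and m2: "integrable \<mu>2 (\<lambda>x. \<bar>x$i\<bar> powr p)"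
  shows "integrable \<gamma> (\<lambda>z. \<bar>fst z $ i - snd z $ i\<bar> powr p)"
proof (rule Bochner_Integration.integrable_bound[where f="\<lambda>z. 2 powr p * (\<bar>fst z $ i\<bar> powr p + \<bar>snd z $ i\<bar> powr p)"])
  have [measurable]: "fst \<in> measurable \<gamma> borel" "snd \<in> measurable \<gamma> borel"
    using coupling_meas[OF c] by auto
  have hm: "(\<lambda>x::real^'n. \<bar>x $ i\<bar> powr p) \<in> borel_measurable borel" by measurable
  have "integrable \<gamma> (\<lambda>z. \<bar>fst z $ i\<bar> powr p)" "integrable \<gamma> (\<lambda>z. \<bar>snd z $ i\<bar> powr p)"
    using coupling_fst(1)[OF c hm] coupling_snd(1)[OF c hm] m1 m2 by auto
  then show "integrable \<gamma> (\<lambda>z. 2 powr p * (\<bar>fst z $ i\<bar> powr p + \<bar>snd z $ i\<bar> powr p))" by auto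
  show "(\<lambda>z. \<bar>fst z $ i - snd z $ i\<bar> powr p) \<in> borel_measurable \<gamma>" by measurable
  show "AE z in \<gamma>. norm (\<bar>fst z $ i - snd z $ i\<bar> powr p) \<le> norm (2 powr p * (\<bar>fst z $ i\<bar> powr p + \<bar>snd z $ i\<bar> powr p))"
    using diff_pow[OF p] by (intro AE_I2) (smt (verit) powr_ge_zero real_norm_def)
qed



lemma key_bound:
  fixes \<mu>1 \<mu>2 :: "(real^'n::finite) measure" and J :: "'n list"
  assumes p: "p > 1" and b1: "borel_prob \<mu>1" and b2: "borel_prob \<mu>2"
    and pi1: "perm_invariant \<mu>1" and pi2: "perm_invariant \<mu>2"
    and mom1: "\<And>i s. 0 \<le> s \<Longrightarrow> s \<le> p0 \<Longrightarrow> integrable \<mu>1 (\<lambda>x. \<bar>x$i\<bar> powr s)"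
    and mom2: "\<And>i s. 0 \<le> s \<Longrightarrow> s \<le> p0 \<Longrightarrow> integrable \<mu>2 (\<lambda>x. \<bar>x$i\<bar> powr s)"
    and pp0: "p \<le> p0" and n: "length J = n" "n \<ge> 1" and np0: "real n \<le> p0"
    and rp0: "p/(p-1) * (real n - 1) \<le> p0"
    and M: "M \<ge> 0"
    and Mb: "\<And>i. n \<ge> 2 \<Longrightarrow> i \<in> set J \<Longrightarrow> coord_norm \<mu>1 (p/(p-1) * (real n - 1)) i \<le> M \<and> coord_norm \<mu>2 (p/(p-1) * (real n - 1)) i \<le> M"
    and c: "coupling \<gamma> \<mu>1 \<mu>2"
  shows "\<bar>(\<integral>x. monomial J x \<partial>\<mu>1) - (\<integral>x. monomial J x \<partial>\<mu>2)\<bar>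
     \<le> real n * M^(n-1) * (\<integral>z. (1 / real CARD('n)) * (\<Sum>i\<in>UNIV. \<bar>fst z $ i - snd z $ i\<bar> powr p) \<partial>\<gamma>) powr (1/p)"
proof -
  let ?PS = "{\<sigma>. \<sigma> permutes (UNIV::'n set)}"
  let ?N = "real CARD('n)"
  let ?r = "p/(p-1) * (real n - 1)"
  let ?D = "(\<integral>x. monomial J x \<partial>\<mu>1) - (\<integral>x. monomial J x \<partial>\<mu>2)"
  have P1: "prob_space \<mu>1" and S1: "sets \<mu>1 = sets borel" using b1 unfolding borel_prob_def by auto
  have P2: "prob_space \<mu>2" and S2: "sets \<mu>2 = sets borel" using b2 unfolding borel_prob_def by auto
  define A where "A i = (\<integral>z. \<bar>fst z $ i - snd z $ i\<bar> powr p \<partial>\<gamma>) powr (1/p)" for i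
  have A0: "A i \<ge> 0" for i unfolding A_def by simp
  have mi1: "integrable \<mu>1 (monomial J)" using mono_int[OF P1 S1 mom1] np0 n by auto
  have mi2: "integrable \<mu>2 (monomial J)" using mono_int[OF P2 S2 mom2] np0 n by auto
  have each: "\<bar>?D\<bar> \<le> M^(n-1) * (\<Sum>l<n. A (\<sigma> (J!l)))" if s: "\<sigma> \<in> ?PS" for \<sigma>
  proof -
    have sp: "\<sigma> permutes UNIV" using s by simp
    have e1: "(\<integral>x. monomial (map \<sigma> J) x \<partial>\<mu>1) = (\<integral>x. monomial J x \<partial>\<mu>1)"
      using perm_integral(2)[OF pi1 sp mi1] by (simp add: mono_perm[OF sp])
    have e2: "(\<integral>x. monomial (map \<sigma> J) x \<partial>\<mu>2) = (\<integral>x. monomial J x \<partial>\<mu>2)"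
      using perm_integral(2)[OF pi2 sp mi2] by (simp add: mono_perm[OF sp])
    have cn: "coord_norm \<mu>1 ?r (\<sigma> j) = coord_norm \<mu>1 ?r j \<and> coord_norm \<mu>2 ?r (\<sigma> j) = coord_norm \<mu>2 ?r j"
      if n2: "n \<ge> 2" for j
    proof -
      have r0: "?r \<ge> 0" using p n2 by auto
      have "(\<integral>x. \<bar>x $ (\<sigma> j)\<bar> powr ?r \<partial>\<mu>1) = (\<integral>x. \<bar>x $ j\<bar> powr ?r \<partial>\<mu>1)"
        using perm_integral(2)[OF pi1 sp mom1[OF r0 rp0, of j]] by (simp add: Qperm_inv_nth[OF sp])
      moreover have "(\<integral>x. \<bar>x $ (\<sigma> j)\<bar> powr ?r \<partial>\<mu>2) = (\<integral>x. \<bar>x $ j\<bar> powr ?r \<partial>\<mu>2)"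
        using perm_integral(2)[OF pi2 sp mom2[OF r0 rp0, of j]] by (simp add: Qperm_inv_nth[OF sp])
      ultimately show ?thesis unfolding coord_norm_def by simp
    qed
    have "\<bar>(\<integral>x. monomial (map \<sigma> J) x \<partial>\<mu>1) - (\<integral>x. monomial (map \<sigma> J) x \<partial>\<mu>2)\<bar>
      \<le> M^(n-1) * (\<Sum>l<n. (\<integral>z. \<bar>fst z $ (map \<sigma> J!l) - snd z $ (map \<sigma> J!l)\<bar> powr p \<partial>\<gamma>) powr (1/p))"
    proof (rule per_coupling[OF p b1 b2 c mom1 mom2 pp0 _ n(2) np0 rp0 M])
      show "length (map \<sigma> J) = n" using n by simp
      fix i assume n2: "n \<ge> 2" and i: "i \<in> set (map \<sigma> J)"
      then obtain j where j: "j \<in> set J" "i = \<sigma> j" by auto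
      show "coord_norm \<mu>1 ?r i \<le> M \<and> coord_norm \<mu>2 ?r i \<le> M"
        using cn[OF n2, of j] Mb[OF n2 j(1)] j(2) by simp
    qed auto
    also have "(\<Sum>l<n. (\<integral>z. \<bar>fst z $ (map \<sigma> J!l) - snd z $ (map \<sigma> J!l)\<bar> powr p \<partial>\<gamma>) powr (1/p)) = (\<Sum>l<n. A (\<sigma> (J!l)))"
      using n by (intro sum.cong) (auto simp: A_def)
    finally show ?thesis using e1 e2 by simp
  qed
  have PSfin: "finite ?PS" by (rule finite_permutations) simp
  have PSpos: "card ?PS > 0" using PSfin permutes_id[of UNIV] by (auto simp: card_gt_0_iff intro!: exI[of _ id])
  have avg: "(\<Sum>\<sigma>\<in>?PS. A (\<sigma> j)) = real (card ?PS) * ((\<Sum>i\<in>UNIV. A i) / ?N)" for j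
    using perm_avg[of A j] by (simp add: field_simps)
  have "real (card ?PS) * \<bar>?D\<bar> = (\<Sum>\<sigma>\<in>?PS. \<bar>?D\<bar>)" by simp
  also have "\<dots> \<le> (\<Sum>\<sigma>\<in>?PS. M^(n-1) * (\<Sum>l<n. A (\<sigma> (J!l))))"
    by (rule sum_mono) (rule each)
  also have "\<dots> = M^(n-1) * (\<Sum>l<n. (\<Sum>\<sigma>\<in>?PS. A (\<sigma> (J!l))))"
    by (simp add: sum_distrib_left sum.swap[of _ ?PS])
  also have "\<dots> = M^(n-1) * (\<Sum>l<n. real (card ?PS) * ((\<Sum>i\<in>UNIV. A i) / ?N))"
    by (simp add: avg)
  also have "\<dots> = real (card ?PS) * (real n * M^(n-1) * ((\<Sum>i\<in>UNIV. A i) / ?N))"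
    by simp
  finally have D0: "real (card ?PS) * \<bar>?D\<bar> \<le> real (card ?PS) * (real n * M^(n-1) * ((\<Sum>i\<in>UNIV. A i) / ?N))" .
  have D1: "\<bar>?D\<bar> \<le> real n * M^(n-1) * ((\<Sum>i\<in>UNIV. A i) / ?N)"
    using D0 PSpos by (subst (asm) mult_le_cancel_left_pos) auto
  have pm: "(\<Sum>i\<in>UNIV. A i) / ?N \<le> ((\<Sum>i\<in>UNIV. A i powr p) / ?N) powr (1/p)"
    by (rule power_mean[OF p A0])
  have Ap: "A i powr p = (\<integral>z. \<bar>fst z $ i - snd z $ i\<bar> powr p \<partial>\<gamma>)" for i
    unfolding A_def using p by (intro powr_inv_id[symmetric]) auto
  have di: "integrable \<gamma> (\<lambda>z. \<bar>fst z $ i - snd z $ i\<bar> powr p)" for i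
    using diff_int[OF c _ mom1 mom2] p pp0 by auto
  have "(\<Sum>i\<in>UNIV. A i powr p) / ?N = (\<integral>z. (1 / ?N) * (\<Sum>i\<in>UNIV. \<bar>fst z $ i - snd z $ i\<bar> powr p) \<partial>\<gamma>)"
    using di by (simp add: Ap Bochner_Integration.integral_sum)
  then have "\<bar>?D\<bar> \<le> real n * M^(n-1) * (\<integral>z. (1 / ?N) * (\<Sum>i\<in>UNIV. \<bar>fst z $ i - snd z $ i\<bar> powr p) \<partial>\<gamma>) powr (1/p)"
    using D1 pm M by (smt (verit) mult_left_mono of_nat_0_le_iff zero_le_power mult_nonneg_nonneg)
  then show ?thesis .
qed



theorem theorem2p4:
  fixes p p0 :: real and \<mu>1 \<mu>2 :: "(real^'n::finite) measure" and J :: "'n list"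
  assumes "p > 1" and "p0 \<ge> p"
    and "borel_prob \<mu>1" and "borel_prob \<mu>2"
    and "perm_invariant \<mu>1" and "perm_invariant \<mu>2"
    and "\<And>i. integrable \<mu>1 (\<lambda>x. \<bar>x $ i\<bar> powr p0)"
    and "\<And>i. integrable \<mu>2 (\<lambda>x. \<bar>x $ i\<bar> powr p0)"
    and "real (length J) \<le> p0 + 1 - p0 / p"
  shows "(length J \<ge> 2 \<longrightarrow> (\<forall>i \<in> set J.
             integrable \<mu>1 (\<lambda>x. \<bar>x $ i\<bar> powr ((p / (p - 1)) * (real (length J) - 1))) \<and>
             integrable \<mu>2 (\<lambda>x. \<bar>x $ i\<bar> powr ((p / (p - 1)) * (real (length J) - 1)))))
      \<and> (card (set J) < CARD('n) \<longrightarrow>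
           \<bar>(\<integral>x. monomial J x \<partial>\<mu>1) - (\<integral>x. monomial J x \<partial>\<mu>2)\<bar>
           \<le> real (length J) * Mconst \<mu>1 \<mu>2 J p ^ (length J - 1)
              * (real (card (set J)) / (1 - real (card (set J)) / real CARD('n))) powr (1 / p)
              * wp_dist p \<mu>1 \<mu>2)"
proof -
  note p = assms(1) and pp0 = assms(2) and b1 = assms(3) and b2 = assms(4)
    and pi1 = assms(5) and pi2 = assms(6) and hn = assms(9)
  define n where "n = length J"
  let ?r = "p/(p-1) * (real n - 1)"
  let ?N = "real CARD('n)"
  have P1: "prob_space \<mu>1" and S1: "sets \<mu>1 = sets borel" using b1 unfolding borel_prob_def by auto
  have P2: "prob_space \<mu>2" and S2: "sets \<mu>2 = sets borel" using b2 unfolding borel_prob_def by auto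
  have mom1: "integrable \<mu>1 (\<lambda>x. \<bar>x$i\<bar> powr s)" if "0 \<le> s" "s \<le> p0" for i s
  proof (rule mom_int[OF P1 _ assms(7) that])
    show "(\<lambda>x. x $ i) \<in> borel_measurable \<mu>1"
      using measurable_cong_sets[OF S1 refl] vec_nth_meas by blast
  qed
  have mom2: "integrable \<mu>2 (\<lambda>x. \<bar>x$i\<bar> powr s)" if "0 \<le> s" "s \<le> p0" for i s
  proof (rule mom_int[OF P2 _ assms(8) that])
    show "(\<lambda>x. x $ i) \<in> borel_measurable \<mu>2"
      using measurable_cong_sets[OF S2 refl] vec_nth_meas by blast
  qed
  have hn': "real n - 1 \<le> p0 * (p - 1) / p" using hn p unfolding n_def by (simp add: field_simps)
  have rp0: "?r \<le> p0"
  proof -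
    have "?r \<le> p/(p-1) * (p0 * (p - 1) / p)"
      using hn' p by (intro mult_left_mono) auto
    also have "\<dots> = p0" using p by (simp add: field_simps)
    finally show ?thesis .
  qed
  have pp: "p0 / p \<ge> 1" using p pp0 by simp
  have np0: "real n \<le> p0" using hn pp unfolding n_def by linarith
  have part1: "length J \<ge> 2 \<longrightarrow> (\<forall>i \<in> set J.
             integrable \<mu>1 (\<lambda>x. \<bar>x $ i\<bar> powr ((p / (p - 1)) * (real (length J) - 1))) \<and>
             integrable \<mu>2 (\<lambda>x. \<bar>x $ i\<bar> powr ((p / (p - 1)) * (real (length J) - 1))))"
  proof (intro impI ballI conjI)
    fix i assume "length J \<ge> 2"
    then have r0: "?r \<ge> 0" using p unfolding n_def by auto
    show "integrable \<mu>1 (\<lambda>x. \<bar>x $ i\<bar> powr ((p / (p - 1)) * (real (length J) - 1)))"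
      using mom1[OF r0 rp0] unfolding n_def by simp
    show "integrable \<mu>2 (\<lambda>x. \<bar>x $ i\<bar> powr ((p / (p - 1)) * (real (length J) - 1)))"
      using mom2[OF r0 rp0] unfolding n_def by simp
  qed
  have part2: "\<bar>(\<integral>x. monomial J x \<partial>\<mu>1) - (\<integral>x. monomial J x \<partial>\<mu>2)\<bar>
           \<le> real (length J) * Mconst \<mu>1 \<mu>2 J p ^ (length J - 1)
              * (real (card (set J)) / (1 - real (card (set J)) / real CARD('n))) powr (1 / p)
              * wp_dist p \<mu>1 \<mu>2" if card_lt: "card (set J) < CARD('n)"
  proof (cases "n = 0")
    case True
    then have "J = []" unfolding n_def by simp
    then have "monomial J = (\<lambda>x. 1)" by (simp add: monomial_def fun_eq_iff)
    then show ?thesis using P1 P2 True unfolding n_def by (simp add: prob_space.prob_space)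
  next
    case False
    then have n1: "n \<ge> 1" by simp
    define M where "M = Mconst \<mu>1 \<mu>2 J p"
    have Mb: "coord_norm \<mu>1 ?r i \<le> M \<and> coord_norm \<mu>2 ?r i \<le> M" if "n \<ge> 2" "i \<in> set J" for i
    proof -
      have "max (coord_norm \<mu>1 ?r i) (coord_norm \<mu>2 ?r i) \<le> Max ((\<lambda>i. max (coord_norm \<mu>1 ?r i) (coord_norm \<mu>2 ?r i)) ` set J)"
        using that by (intro Max_ge) auto
      then show ?thesis using that unfolding M_def Mconst_def n_def by (simp add: Let_def)
    qed
    have M0: "M \<ge> 0"
    proof (cases "n = 1")
      case True then show ?thesis unfolding M_def Mconst_def n_def by simp
    next
      case False
      then have n2: "n \<ge> 2" using n1 by simp
      have "J ! 0 \<in> set J" using n1 unfolding n_def by (simp add: Suc_le_eq)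
      then have "coord_norm \<mu>1 ?r (J!0) \<le> M" using Mb[OF n2] by blast
      moreover have "coord_norm \<mu>1 ?r (J!0) \<ge> 0" unfolding coord_norm_def by simp
      ultimately show ?thesis by simp
    qed
    let ?D = "(\<integral>x. monomial J x \<partial>\<mu>1) - (\<integral>x. monomial J x \<partial>\<mu>2)"
    define cost where "cost z = (1 / ?N) * (\<Sum>i\<in>UNIV. \<bar>fst z $ i - snd z $ i\<bar> powr p)" for z :: "(real^'n) \<times> (real^'n)"
    define K where "K = real n * M^(n-1)"
    have K0: "K \<ge> 0" unfolding K_def using M0 by simp
    have key: "\<bar>?D\<bar> \<le> K * (\<integral>z. cost z \<partial>\<gamma>) powr (1/p)" if c: "coupling \<gamma> \<mu>1 \<mu>2" for \<gamma>
      unfolding K_def cost_def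
      by (rule key_bound[OF p b1 b2 pi1 pi2 mom1 mom2 pp0 _ n1 np0 rp0 M0 Mb c]) (auto simp: n_def)
    have cint: "integrable \<gamma> cost" if c: "coupling \<gamma> \<mu>1 \<mu>2" for \<gamma>
    proof -
      have "integrable \<gamma> (\<lambda>z. \<bar>fst z $ i - snd z $ i\<bar> powr p)" for i
        using diff_int[OF c _ mom1 mom2] p pp0 by auto
      then show ?thesis unfolding cost_def by auto
    qed
    have cnn: "cost z \<ge> 0" for z unfolding cost_def by (simp add: sum_nonneg)
    have Ceq: "(\<integral>\<^sup>+ z. ennreal (cost z) \<partial>\<gamma>) = ennreal (\<integral>z. cost z \<partial>\<gamma>)" if c: "coupling \<gamma> \<mu>1 \<mu>2" for \<gamma>
      using cint[OF c] cnn by (intro nn_integral_eq_integral) auto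
    have wpe: "wp_cost p \<mu>1 \<mu>2 = (INF \<gamma> \<in> {\<gamma>. coupling \<gamma> \<mu>1 \<mu>2}. ennreal (\<integral>z. cost z \<partial>\<gamma>))"
      unfolding wp_cost_def cost_def[symmetric] using Ceq by (intro INF_cong) auto
    define \<gamma>0 where "\<gamma>0 = \<mu>1 \<Otimes>\<^sub>M \<mu>2"
    have c0: "coupling \<gamma>0 \<mu>1 \<mu>2" unfolding \<gamma>0_def by (rule prod_coupling[OF b1 b2])
    have wfin: "wp_cost p \<mu>1 \<mu>2 < \<infinity>"
    proof -
      have "wp_cost p \<mu>1 \<mu>2 \<le> ennreal (\<integral>z. cost z \<partial>\<gamma>0)"
        unfolding wpe using c0 by (intro INF_lower) auto
      then show ?thesis by (simp add: le_less_trans)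
    qed
    have card1: "real (card (set J)) \<ge> 1"
      using n1 unfolding n_def by (simp add: Suc_le_eq card_gt_0_iff)
    have F1: "(real (card (set J)) / (1 - real (card (set J)) / ?N)) powr (1 / p) \<ge> 1"
    proof (rule ge_one_powr_ge_zero)
      have lt: "real (card (set J)) / ?N < 1" using card_lt by simp
      have gt: "real (card (set J)) / ?N > 0" using card1 by simp
      have "real (card (set J)) \<le> real (card (set J)) / (1 - real (card (set J)) / ?N)"
        using lt gt card1 by (simp add: le_divide_eq)
      then show "1 \<le> real (card (set J)) / (1 - real (card (set J)) / ?N)" using card1 by linarith
    qed (use p in auto)
    have wd0: "wp_dist p \<mu>1 \<mu>2 \<ge> 0" unfolding wp_dist_def by simp
    have main: "\<bar>?D\<bar> \<le> K * wp_dist p \<mu>1 \<mu>2"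
    proof (cases "K = 0")
      case True
      then show ?thesis using key[OF c0] by simp
    next
      case False
      then have Kp: "K > 0" using K0 by simp
      have "ennreal ((\<bar>?D\<bar> / K) powr p) \<le> ennreal (\<integral>z. cost z \<partial>\<gamma>)" if c: "coupling \<gamma> \<mu>1 \<mu>2" for \<gamma>
      proof (rule ennreal_leI)
        have ci0: "(\<integral>z. cost z \<partial>\<gamma>) \<ge> 0" using cnn by simp
        have "\<bar>?D\<bar> / K \<le> (\<integral>z. cost z \<partial>\<gamma>) powr (1/p)"
          using key[OF c] Kp by (simp add: divide_le_eq mult.commute)
        then have "(\<bar>?D\<bar> / K) powr p \<le> ((\<integral>z. cost z \<partial>\<gamma>) powr (1/p)) powr p"
          using p Kp by (intro powr_mono2) auto
        also have "\<dots> = (\<integral>z. cost z \<partial>\<gamma>)" using p ci0 by (intro powr_inv_id[symmetric]) auto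
        finally show "(\<bar>?D\<bar> / K) powr p \<le> (\<integral>z. cost z \<partial>\<gamma>)" .
      qed
      then have "ennreal ((\<bar>?D\<bar> / K) powr p) \<le> wp_cost p \<mu>1 \<mu>2"
        unfolding wpe by (intro INF_greatest) auto
      then have "enn2real (ennreal ((\<bar>?D\<bar> / K) powr p)) \<le> enn2real (wp_cost p \<mu>1 \<mu>2)"
        using wfin by (intro enn2real_mono) auto
      then have h: "(\<bar>?D\<bar> / K) powr p \<le> enn2real (wp_cost p \<mu>1 \<mu>2)" by simp
      have "\<bar>?D\<bar> / K = ((\<bar>?D\<bar> / K) powr p) powr (1/p)"
        using p Kp by (simp add: powr_powr)
      also have "\<dots> \<le> wp_dist p \<mu>1 \<mu>2"
        unfolding wp_dist_def using h p by (intro powr_mono2) auto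
      finally show ?thesis using Kp by (simp add: divide_le_eq mult.commute)
    qed
    have "K * wp_dist p \<mu>1 \<mu>2 \<le> K * (real (card (set J)) / (1 - real (card (set J)) / ?N)) powr (1 / p) * wp_dist p \<mu>1 \<mu>2"
    proof -
      have "K * wp_dist p \<mu>1 \<mu>2 * 1 \<le> K * wp_dist p \<mu>1 \<mu>2 * (real (card (set J)) / (1 - real (card (set J)) / ?N)) powr (1 / p)"
        using F1 K0 wd0 by (intro mult_left_mono) auto
      then show ?thesis by (simp add: mult_ac)
    qed
    then show ?thesis using main unfolding K_def M_def n_def by simp
  qed
  show ?thesis using part1 part2 by blast
qed

end
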